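(* Let $H$ be a simple graph which is neither a matching nor a star, and let $\alpha,\beta>0$. (1) If $\operatorname{ex}(K_n,H)=O(n^\alpha)$ as $n\to\infty$, then $\mathcal{E}_H(k)=\Omega(k^{2/\alpha})$ as $k\to\infty$. (2) If $\operatorname{ex}(K_n,H)=\Omega(n^\beta)$ as $n\to\infty$, then $\mathcal{E}^*_H(k)=O(k^{3-\beta})$ as $k\to\infty$.
   Context: Graphs are 2-uniform without isolated vertices; a matching is $sK_2$ and a star is $K_{1,s}$. Multigraphs may have parallel edges (no loops), with $e(\cdot)$ counting multiplicity. $\operatorname{ex}(G,H)$ is the maximum number of edges of a sub-multigraph of $G$ containing no copy of $H$. $\mathcal{E}_H(k):=\sup\{e(G): G\text{ simple}, \operatorname{ex}(G,H)<k\}$ and $\mathcal{E}^*_H(k):=\sup\{e(G): G\text{ multigraph}, \operatorname{ex}(G,H)<k\}$. *)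

theory Defs
  imports Complex_Main "HOL-Library.Multiset" "HOL-Library.Landau_Symbols" "HOL-Library.Extended_Real"
begin

text \<open>A simple graph is a finite set of 2-element vertex sets (no isolated vertices:
  the vertex set is the union of the edges).  A multigraph is a finite multiset of
  2-element vertex sets (parallel edges allowed, no loops); e(.) = size.\<close>

definition simple_graph :: "'a set set \<Rightarrow> bool" where
  "simple_graph G \<longleftrightarrow> finite G \<and> (\<forall>e\<in>G. card e = 2)"

definition multigraph :: "'a set multiset \<Rightarrow> bool" where
  "multigraph M \<longleftrightarrow> (\<forall>e\<in>#M. card e = 2)"

definition verts :: "'a set set \<Rightarrow> 'a set" where
  "verts H = \<Union>H"

definition contains_copy :: "'b set multiset \<Rightarrow> 'a set set \<Rightarrow> bool" where
  "contains_copy M H \<longleftrightarrow> (\<exists>f. inj_on f (verts H) \<and> (\<forall>e\<in>H. f ` e \<in># M))"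

definition exM :: "'b set multiset \<Rightarrow> 'a set set \<Rightarrow> nat" where
  "exM G H = Max {size G' | G'. G' \<subseteq># G \<and> \<not> contains_copy G' H}"

text \<open>ex(G,H) for a simple host graph G (its sub-multigraphs are its subgraphs).\<close>
definition ex :: "'b set set \<Rightarrow> 'a set set \<Rightarrow> nat" where
  "ex G H = exM (mset_set G) H"

definition complete_graph :: "nat \<Rightarrow> nat set set" where
  "complete_graph n = {{i, j} | i j. i < j \<and> j < n}"

definition is_matching :: "'a set set \<Rightarrow> bool" where
  "is_matching H \<longleftrightarrow> (\<forall>e\<in>H. \<forall>e'\<in>H. e \<noteq> e' \<longrightarrow> e \<inter> e' = {})"

definition is_star :: "'a set set \<Rightarrow> bool" where
  "is_star H \<longleftrightarrow> (\<exists>v. \<forall>e\<in>H. v \<in> e)"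

text \<open>Host graphs are taken on vertex type nat (every finite graph has an isomorphic copy).\<close>
definition E_simple :: "'a set set \<Rightarrow> nat \<Rightarrow> ereal" where
  "E_simple H k = Sup ((\<lambda>G. ereal (real (card G))) `
      {G :: nat set set. simple_graph G \<and> ex G H < k})"

definition E_multi :: "'a set set \<Rightarrow> nat \<Rightarrow> ereal" where
  "E_multi H k = Sup ((\<lambda>G. ereal (real (size G))) `
      {G :: nat set multiset. multigraph G \<and> exM G H < k})"

end

theory Submission
  imports Defs "HOL-Combinatorics.Permutations"
begin

lemma contains_copy_set:
  "contains_copy M H \<longleftrightarrow> (\<exists>f. inj_on f (verts H) \<and> (\<forall>e\<in>H. f ` e \<in> set_mset M))"
  unfolding contains_copy_def by simp

lemma exM_ge:
  assumes "G' \<subseteq># G" "\<not> contains_copy G' H"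
  shows "size G' \<le> exM G H"
proof -
  have fin: "finite {size G' | G'. G' \<subseteq># G \<and> \<not> contains_copy G' H}"
    by (rule finite_subset[of _ "{0..size G}"]) (auto dest: size_mset_mono)
  show ?thesis unfolding exM_def by (rule Max_ge[OF fin]) (use assms in auto)
qed

lemma exM_obtain:
  assumes "H \<noteq> {}"
  obtains G' where "G' \<subseteq># G" "\<not> contains_copy G' H" "size G' = exM G H"
proof -
  let ?S = "{size G' | G'. G' \<subseteq># G \<and> \<not> contains_copy G' H}"
  have fin: "finite ?S"
    by (rule finite_subset[of _ "{0..size G}"]) (auto dest: size_mset_mono)
  have "\<not> contains_copy {#} H" using assms unfolding contains_copy_def by auto
  hence "0 \<in> ?S" by (auto intro!: exI[of _ "{#}"])
  hence ne: "?S \<noteq> {}" by blast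
  have "Max ?S \<in> ?S" using Max_in[OF fin ne] .
  then show ?thesis using that unfolding exM_def by auto
qed

lemma cover_bound:
  assumes "finite C" "\<forall>e\<in>#G. e \<inter> C \<noteq> {}"
  shows "size G \<le> (\<Sum>v\<in>C. size (filter_mset (\<lambda>e. v \<in> e) G))"
  using assms(2)
proof (induction G)
  case empty then show ?case by simp
next
  case (add e G)
  have IH: "size G \<le> (\<Sum>v\<in>C. size (filter_mset (\<lambda>e. v \<in> e) G))" using add by auto
  obtain w where w: "w \<in> e" "w \<in> C" using add.prems by auto
  have "(\<Sum>v\<in>C. size (filter_mset (\<lambda>e. v \<in> e) (add_mset e G)))
      = (\<Sum>v\<in>C. size (filter_mset (\<lambda>e. v \<in> e) G) + (if w = v then 1 else 0)) + (\<Sum>v\<in>C. (if v \<in> e \<and> v \<noteq> w then 1 else 0))"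
    using w by (simp add: sum.distrib[symmetric]) (rule sum.cong, auto)
  also have "\<dots> \<ge> (\<Sum>v\<in>C. size (filter_mset (\<lambda>e. v \<in> e) G)) + 1"
    using w assms(1) by (simp add: sum.distrib)
  finally show ?case using IH by simp
qed


definition leafy :: "'a set set \<Rightarrow> bool" where
  "leafy H \<longleftrightarrow> (\<exists>L\<subseteq>verts H. (\<forall>e\<in>H. card (e \<inter> L) = 1) \<and>
      (\<forall>x\<in>L. \<forall>e\<in>H. \<forall>e'\<in>H. x \<in> e \<longrightarrow> x \<in> e' \<longrightarrow> e = e'))"

lemma inj_on_image_edges:
  assumes "inj_on f (verts H)" "e \<in> H" "e' \<in> H" "f ` e = f ` e'"
  shows "e = e'"
proof -
  have "e \<subseteq> verts H" "e' \<subseteq> verts H" using assms unfolding verts_def by auto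
  then show ?thesis using assms inj_on_image_eq_iff by metis
qed

lemma matching_free:
  assumes "\<not> is_matching H" "is_matching M" "finite M"
  shows "\<not> contains_copy (mset_set M) H"
proof
  assume "contains_copy (mset_set M) H"
  then obtain f where f: "inj_on f (verts H)" "\<forall>e\<in>H. f ` e \<in> M"
    using assms(3) unfolding contains_copy_set by auto
  obtain e1 e2 where e: "e1 \<in> H" "e2 \<in> H" "e1 \<noteq> e2" "e1 \<inter> e2 \<noteq> {}"
    using assms(1) unfolding is_matching_def by auto
  then obtain x where x: "x \<in> e1" "x \<in> e2" by auto
  have ne: "f ` e1 \<noteq> f ` e2" using inj_on_image_edges[OF f(1) e(1,2)] e(3) by auto
  have fx: "f x \<in> f ` e1 \<inter> f ` e2" using x by auto
  have m1: "f ` e1 \<in> M" and m2: "f ` e2 \<in> M" using f(2) e by auto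
  have m: "\<forall>a\<in>M. \<forall>b\<in>M. a \<noteq> b \<longrightarrow> a \<inter> b = {}" using assms(2) unfolding is_matching_def .
  have "f ` e1 \<inter> f ` e2 = {}" using m[rule_format, OF m1 m2 ne] .
  then show False using fx by simp
qed

lemma star_free:
  assumes "\<not> is_star H"
  shows "\<not> contains_copy (filter_mset (\<lambda>e. v \<in> e) G) H"
proof
  assume "contains_copy (filter_mset (\<lambda>e. v \<in> e) G) H"
  then obtain f where f: "inj_on f (verts H)" "\<forall>e\<in>H. v \<in> f ` e"
    unfolding contains_copy_def by auto
  have "H \<noteq> {}" using assms unfolding is_star_def by auto
  then obtain e0 where e0: "e0 \<in> H" by auto
  then obtain u where u: "u \<in> e0" "f u = v" using f(2) by auto
  have "\<forall>e\<in>H. u \<in> e"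
  proof
    fix e assume e: "e \<in> H"
    then obtain x where x: "x \<in> e" "f x = v" using f(2) by auto
    have xV: "x \<in> verts H" and uV: "u \<in> verts H" using x e u e0 unfolding verts_def by auto
    have "f x = f u" using x u by simp
    then have "x = u" using inj_onD[OF f(1) _ xV uV] by simp
    then show "u \<in> e" using x by simp
  qed
  then show False using assms unfolding is_star_def by auto
qed

lemma multigraph_sub: "multigraph G \<Longrightarrow> e \<in># G \<Longrightarrow> card e = 2"
  unfolding multigraph_def by auto

lemma multigraph_finU: "multigraph G \<Longrightarrow> finite (\<Union>(set_mset G))"
proof (rule finite_Union)
  fix e assume "multigraph G" "e \<in> set_mset G"
  then have "card e = 2" using multigraph_sub by auto
  then show "finite e" by (intro card_ge_0_finite) simp
qed simp

lemma struct_bound: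
  fixes G :: "'b set multiset" and H :: "'a set set"
  assumes G: "multigraph G" and sH: "simple_graph H" and nm: "\<not> is_matching H" and ns: "\<not> is_star H"
    and k: "exM G H < k"
  shows "size G \<le> 2 * k * k" "\<not> leafy H \<Longrightarrow> card (\<Union>(set_mset G)) < 3 * k"
proof -
  let ?S = "set_mset G"
  let ?MS = "{M. M \<subseteq> ?S \<and> is_matching M}"
  have finMS: "finite ?MS" by (rule finite_subset[of _ "Pow ?S"]) auto
  have "{} \<in> ?MS" unfolding is_matching_def by auto
  then have ne: "card ` ?MS \<noteq> {}" by blast
  have "Max (card ` ?MS) \<in> card ` ?MS" using Max_in[OF finite_imageI[OF finMS] ne] .
  then obtain M where M1: "M \<in> ?MS" "card M = Max (card ` ?MS)" by auto
  have M: "M \<in> ?MS" "\<forall>M'\<in>?MS. card M' \<le> card M"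
    using M1 Max_ge[OF finite_imageI[OF finMS]] by auto
  have Msub: "M \<subseteq> ?S" and Mm: "is_matching M" using M by auto
  have finM: "finite M" using Msub finite_subset by auto
  have "mset_set M \<subseteq># G"
    by (meson Msub finM finite_set_mset mset_set_set_mset_msubset msubset_mset_set_iff subset_mset.order_trans)
  then have "card M \<le> exM G H"
    using exM_ge[of "mset_set M" G H] matching_free[OF nm Mm finM] by simp
  then have cM: "card M < k" using k by simp
  define C where "C = \<Union>M"
  have finC: "finite C" unfolding C_def using finM Msub G multigraph_sub
    by (metis card.infinite finite_Union in_mono zero_neq_numeral)
  have "card C \<le> (\<Sum>e\<in>M. card e)" unfolding C_def by (rule card_Union_le_sum_card)
  also have "\<dots> = (\<Sum>e\<in>M. 2)" by (rule sum.cong) (use Msub G multigraph_sub in auto)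
  also have "\<dots> = 2 * card M" by simp
  finally have cC: "card C \<le> 2 * (k - 1)" using cM by simp
  have cover: "\<forall>e\<in>#G. e \<inter> C \<noteq> {}"
  proof (rule ccontr)
    assume "\<not> (\<forall>e\<in>#G. e \<inter> C \<noteq> {})"
    then obtain e where e: "e \<in># G" "e \<inter> C = {}" by auto
    have ce: "card e = 2" using G e multigraph_sub by auto
    then have "e \<notin> M" using e unfolding C_def by (auto simp: card_2_iff)
    have "insert e M \<in> ?MS" using Msub Mm e unfolding is_matching_def C_def by auto
    then have "card (insert e M) \<le> card M" using M by auto
    then show False using \<open>e \<notin> M\<close> finM by simp
  qed
  have star: "size (filter_mset (\<lambda>e. v \<in> e) G) \<le> k - 1" for v
  proof -
    have "size (filter_mset (\<lambda>e. v \<in> e) G) \<le> exM G H"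
      by (rule exM_ge[OF multiset_filter_subset star_free[OF ns]])
    then show ?thesis using k by simp
  qed
  have "size G \<le> (\<Sum>v\<in>C. size (filter_mset (\<lambda>e. v \<in> e) G))" by (rule cover_bound[OF finC cover])
  also have "\<dots> \<le> (\<Sum>v\<in>C. k - 1)" by (rule sum_mono) (rule star)
  also have "\<dots> = card C * (k - 1)" by simp
  also have "\<dots> \<le> 2 * k * k" by (rule mult_le_mono) (use cC in auto)
  finally show "size G \<le> 2 * k * k" .
  assume nl: "\<not> leafy H"
  define D where "D = \<Union>?S - C"
  have "\<forall>v\<in>D. \<exists>w. {v, w} \<in> ?S \<and> w \<in> C"
  proof
    fix v assume v: "v \<in> D"
    then obtain e where e: "e \<in> ?S" "v \<in> e" "v \<notin> C" unfolding D_def by auto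
    then obtain w where w: "w \<in> e" "w \<in> C" using cover by auto
    have "card e = 2" using e G multigraph_sub by auto
    then have "e = {v, w}" using e w by (auto simp: card_2_iff)
    then show "\<exists>w. {v, w} \<in> ?S \<and> w \<in> C" using e w by auto
  qed
  then obtain p where p: "\<forall>v\<in>D. {v, p v} \<in> ?S \<and> p v \<in> C" by metis
  define T where "T = (\<lambda>v. {v, p v}) ` D"
  have DC: "D \<inter> C = {}" unfolding D_def by auto
  have injT: "inj_on (\<lambda>v. {v, p v}) D"
  proof (rule inj_onI)
    fix v v' assume "v \<in> D" "v' \<in> D" "{v, p v} = {v', p v'}"
    then show "v = v'" using p DC by (auto simp: doubleton_eq_iff)
  qed
  have TS: "T \<subseteq> ?S" unfolding T_def using p by auto
  have finT: "finite T" using TS finite_subset by auto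
  have Tfree: "\<not> contains_copy (mset_set T) H"
  proof
    assume "contains_copy (mset_set T) H"
    then obtain f where f: "inj_on f (verts H)" "\<forall>e\<in>H. f ` e \<in> T"
      using finT unfolding contains_copy_set by auto
    define L where "L = {x \<in> verts H. f x \<in> D}"
    have "L \<subseteq> verts H" unfolding L_def by auto
    moreover have "\<forall>e\<in>H. card (e \<inter> L) = 1"
    proof
      fix e assume e: "e \<in> H"
      have "card e = 2" using sH e unfolding simple_graph_def by auto
      then obtain a b where ab: "e = {a, b}" "a \<noteq> b" by (auto simp: card_2_iff)
      have abV: "a \<in> verts H" "b \<in> verts H" using e ab unfolding verts_def by auto
      have fab: "f a \<noteq> f b" using f(1) abV ab(2) by (meson inj_onD)
      obtain v where v: "v \<in> D" "f ` e = {v, p v}" using f(2) e unfolding T_def by auto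
      have pv: "p v \<notin> D" using p v(1) DC by auto
      have "{f a, f b} = {v, p v}" using v(2) ab by auto
      then have "(f a = v \<and> f b = p v) \<or> (f a = p v \<and> f b = v)" by (auto simp: doubleton_eq_iff)
      then have "e \<inter> L = {a} \<or> e \<inter> L = {b}" using ab abV v(1) pv unfolding L_def by auto
      then show "card (e \<inter> L) = 1" by auto
    qed
    moreover have "\<forall>x\<in>L. \<forall>e\<in>H. \<forall>e'\<in>H. x \<in> e \<longrightarrow> x \<in> e' \<longrightarrow> e = e'"
    proof (intro ballI impI)
      fix x e e' assume x: "x \<in> L" and e: "e \<in> H" "e' \<in> H" "x \<in> e" "x \<in> e'"
      have fxD: "f x \<in> D" using x unfolding L_def by auto
      have gen: "f ` e0 = {f x, p (f x)}" if h0: "e0 \<in> H" and h1: "x \<in> e0" for e0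
      proof -
        obtain v where v: "v \<in> D" "f ` e0 = {v, p v}" using f(2) h0 unfolding T_def by auto
        have "p v \<notin> D" using p v(1) DC by auto
        moreover have "f x \<in> {v, p v}" using v(2) h1 by blast
        ultimately have "f x = v" using fxD by auto
        then show ?thesis using v by simp
      qed
      have "f ` e = {f x, p (f x)}" using gen e by auto
      moreover have "f ` e' = {f x, p (f x)}" using gen e by auto
      ultimately show "e = e'" using inj_on_image_edges[OF f(1) e(1,2)] by simp
    qed
    ultimately show False using nl unfolding leafy_def by blast
  qed
  have "mset_set T \<subseteq># G"
    by (meson TS finT finite_set_mset mset_set_set_mset_msubset msubset_mset_set_iff subset_mset.order_trans)
  then have "card T \<le> exM G H" using exM_ge[OF _ Tfree] by simp
  moreover have "card T = card D" unfolding T_def using card_image[OF injT] .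
  ultimately have cD: "card D \<le> k - 1" using k by simp
  have "\<Union>?S \<subseteq> C \<union> D" unfolding D_def by auto
  moreover have finU: "finite (\<Union>?S)"
    using multigraph_finU[OF G] .
  ultimately have "card (\<Union>?S) \<le> card (C \<union> D)"
    by (intro card_mono) (auto simp: finC D_def)
  also have "\<dots> \<le> card C + card D" by (rule card_Un_le)
  finally have "card (\<Union>?S) \<le> card C + card D" .
  then show "card (\<Union>?S) < 3 * k" using cC cD k by linarith
qed


lemma complete_graph_char: "complete_graph N = {e. e \<subseteq> {0..<N} \<and> card e = 2}"
proof (rule set_eqI)
  fix e :: "nat set"
  show "e \<in> complete_graph N \<longleftrightarrow> e \<in> {e. e \<subseteq> {0..<N} \<and> card e = 2}"
  proof
    assume "e \<in> complete_graph N"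
    then show "e \<in> {e. e \<subseteq> {0..<N} \<and> card e = 2}" unfolding complete_graph_def by auto
  next
    assume "e \<in> {e. e \<subseteq> {0..<N} \<and> card e = 2}"
    then obtain a b where ab: "e = {a, b}" "a \<noteq> b" "a < N" "b < N" by (auto simp: card_2_iff)
    show "e \<in> complete_graph N"
    proof (cases "a < b")
      case True then show ?thesis using ab unfolding complete_graph_def by auto
    next
      case False then have "b < a" using ab by auto
      then show ?thesis using ab unfolding complete_graph_def by (auto simp: insert_commute)
    qed
  qed
qed

lemma card_complete_graph: "card (complete_graph N) = N choose 2"
  unfolding complete_graph_char using n_subsets[of "{0..<N}" 2] by simp

lemma finite_complete_graph: "finite (complete_graph N)"
  unfolding complete_graph_char by (rule finite_subset[of _ "Pow {0..<N}"]) auto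

lemma perm_K:
  assumes "\<sigma> permutes {0..<N}" "e \<in> complete_graph N"
  shows "\<sigma> ` e \<in> complete_graph N"
proof -
  have "e \<subseteq> {0..<N}" "card e = 2" using assms(2) unfolding complete_graph_char by auto
  moreover have "inj_on \<sigma> e" using permutes_inj[OF assms(1)] inj_on_subset by blast
  ultimately show ?thesis using permutes_image[OF assms(1)] unfolding complete_graph_char
    by (auto simp: card_image)
qed

lemma perm_pair:
  assumes "e \<in> complete_graph N" "e' \<in> complete_graph N"
  shows "\<exists>\<tau>. \<tau> permutes {0..<N} \<and> \<tau> ` e' = e"
proof -
  obtain a b where ab: "e' = {a, b}" "a \<noteq> b" "a < N" "b < N"
    using assms(2) unfolding complete_graph_char by (auto simp: card_2_iff)
  obtain c d where cd: "e = {c, d}" "c \<noteq> d" "c < N" "d < N"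
    using assms(1) unfolding complete_graph_char by (auto simp: card_2_iff)
  define t1 where "t1 = Transposition.transpose a c"
  define b' where "b' = t1 b"
  define t2 where "t2 = Transposition.transpose b' d"
  have b'N: "b' < N" using ab cd unfolding b'_def t1_def by (auto simp: transpose_def)
  have cb': "c \<noteq> b'" using ab cd unfolding b'_def t1_def by (auto simp: transpose_def)
  have p1: "t1 permutes {0..<N}" unfolding t1_def using ab cd by (intro permutes_swap_id) auto
  have p2: "t2 permutes {0..<N}" unfolding t2_def using b'N cd by (intro permutes_swap_id) auto
  have "(t2 \<circ> t1) a = c" using cb' cd unfolding t1_def t2_def by (auto simp: transpose_def)
  moreover have "(t2 \<circ> t1) b = d" unfolding t2_def b'_def by (auto simp: transpose_def)
  ultimately have "(t2 \<circ> t1) ` e' = e" using ab cd by auto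
  moreover have "t2 \<circ> t1 permutes {0..<N}" using permutes_compose[OF p1 p2] .
  ultimately show ?thesis by blast
qed

lemma X_le:
  assumes "e \<in> complete_graph N" "e' \<in> complete_graph N"
  shows "card {\<sigma>. \<sigma> permutes {0..<N} \<and> \<sigma> ` e \<in> Fs} \<le> card {\<sigma>. \<sigma> permutes {0..<N} \<and> \<sigma> ` e' \<in> Fs}"
proof -
  obtain \<tau> where t: "\<tau> permutes {0..<N}" "\<tau> ` e' = e" using perm_pair[OF assms] by blast
  have "inj_on (\<lambda>\<sigma>. \<sigma> \<circ> \<tau>) {\<sigma>. \<sigma> permutes {0..<N} \<and> \<sigma> ` e \<in> Fs}"
  proof (rule inj_onI)
    fix \<sigma> \<sigma>' assume "\<sigma> \<circ> \<tau> = \<sigma>' \<circ> \<tau>"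
    moreover have "surj \<tau>" using permutes_surj[OF t(1)] .
    ultimately show "\<sigma> = \<sigma>'" by (metis fun.map_comp surj_fun_eq)
  qed
  moreover have "(\<lambda>\<sigma>. \<sigma> \<circ> \<tau>) ` {\<sigma>. \<sigma> permutes {0..<N} \<and> \<sigma> ` e \<in> Fs} \<subseteq> {\<sigma>. \<sigma> permutes {0..<N} \<and> \<sigma> ` e' \<in> Fs}"
    using t permutes_compose[OF t(1)] by (auto simp: image_image)
  moreover have "finite {\<sigma>. \<sigma> permutes {0..<N} \<and> \<sigma> ` e' \<in> Fs}"
    using finite_permutations[OF finite_atLeastLessThan[of 0 N]] by (rule finite_subset[rotated]) auto
  ultimately show ?thesis by (rule card_inj_on_le)
qed

lemma card_preimage_F0:
  assumes "\<sigma> permutes {0..<N}" "F0 \<subseteq> complete_graph N"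
  shows "card {e'\<in>complete_graph N. \<sigma> ` e' \<in> F0} = card F0"
proof -
  have inj: "inj_on (\<lambda>e'. \<sigma> ` e') X" for X
    using permutes_inj[OF assms(1)] by (meson inj_image_eq_iff inj_onI)
  have "(\<lambda>e'. \<sigma> ` e') ` {e'\<in>complete_graph N. \<sigma> ` e' \<in> F0} = F0"
  proof
    show "(\<lambda>e'. \<sigma> ` e') ` {e'\<in>complete_graph N. \<sigma> ` e' \<in> F0} \<subseteq> F0" by auto
    show "F0 \<subseteq> (\<lambda>e'. \<sigma> ` e') ` {e'\<in>complete_graph N. \<sigma> ` e' \<in> F0}"
    proof
      fix f assume f: "f \<in> F0"
      have pi: "inv \<sigma> permutes {0..<N}" using permutes_inv[OF assms(1)] .
      have "\<sigma> ` (inv \<sigma> ` f) = f" using permutes_surj[OF assms(1)]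
        by (simp add: image_comp surj_iff)
      moreover have "inv \<sigma> ` f \<in> complete_graph N" using perm_K[OF pi] f assms(2) by auto
      ultimately show "f \<in> (\<lambda>e'. \<sigma> ` e') ` {e'\<in>complete_graph N. \<sigma> ` e' \<in> F0}"
        using f by (metis (mono_tags, lifting) image_eqI mem_Collect_eq)
    qed
  qed
  then show ?thesis using card_image[OF inj] by metis
qed

lemma X_const:
  assumes "F0 \<subseteq> complete_graph N" "e \<in> complete_graph N"
  shows "card {\<sigma>. \<sigma> permutes {0..<N} \<and> \<sigma> ` e \<in> F0} * (N choose 2)
       = card {\<sigma>. \<sigma> permutes {0..<N}} * card F0"
proof -
  let ?P = "{\<sigma>. \<sigma> permutes {0..<N}}"
  let ?K = "complete_graph N"
  let ?X = "\<lambda>e. card {\<sigma>. \<sigma> permutes {0..<N} \<and> \<sigma> ` e \<in> F0}"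
  have finP: "finite ?P" using finite_permutations[OF finite_atLeastLessThan[of 0 N]] .
  have Xe: "?X e' = ?X e" if "e' \<in> ?K" for e'
    using X_le[where Fs=F0, OF that assms(2)] X_le[where Fs=F0, OF assms(2) that] by linarith
  have Xs: "?X e' = (\<Sum>\<sigma>\<in>?P. if \<sigma> ` e' \<in> F0 then 1 else 0)" for e'
  proof -
    have "?X e' = card {\<sigma>\<in>?P. \<sigma> ` e' \<in> F0}" by simp
    also have "\<dots> = (\<Sum>\<sigma>\<in>{\<sigma>\<in>?P. \<sigma> ` e' \<in> F0}. 1)" by simp
    also have "\<dots> = (\<Sum>\<sigma>\<in>?P. if \<sigma> ` e' \<in> F0 then 1 else 0)" by (rule sum.inter_filter[OF finP])
    finally show ?thesis .
  qed
  have Ks: "card {e'\<in>?K. \<sigma> ` e' \<in> F0} = (\<Sum>e'\<in>?K. if \<sigma> ` e' \<in> F0 then 1 else 0)" for \<sigma>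
    using sum.inter_filter[OF finite_complete_graph, of "\<lambda>_. 1::nat"] by simp
  have "card ?K * ?X e = (\<Sum>e'\<in>?K. ?X e')" using Xe by simp
  also have "\<dots> = (\<Sum>e'\<in>?K. \<Sum>\<sigma>\<in>?P. if \<sigma> ` e' \<in> F0 then 1 else 0)" using Xs by simp
  also have "\<dots> = (\<Sum>\<sigma>\<in>?P. \<Sum>e'\<in>?K. if \<sigma> ` e' \<in> F0 then 1 else 0)" by (rule sum.swap)
  also have "\<dots> = (\<Sum>\<sigma>\<in>?P. card F0)"
    by (rule sum.cong) (use Ks card_preimage_F0[OF _ assms(1)] in auto)
  also have "\<dots> = card ?P * card F0" by simp
  finally show ?thesis using card_complete_graph by (simp add: mult.commute)
qed

lemma sum_size_filter:
  assumes "finite P"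
  shows "(\<Sum>\<sigma>\<in>P. size (filter_mset (\<lambda>e. Q \<sigma> e) G)) = (\<Sum>e\<in>#G. card {\<sigma>\<in>P. Q \<sigma> e})"
proof (induction G)
  case empty then show ?case by simp
next
  case (add x G)
  have "(\<Sum>\<sigma>\<in>P. size (filter_mset (\<lambda>e. Q \<sigma> e) (add_mset x G)))
      = (\<Sum>\<sigma>\<in>P. size (filter_mset (\<lambda>e. Q \<sigma> e) G)) + (\<Sum>\<sigma>\<in>P. if Q \<sigma> x then 1 else 0)"
    by (simp add: sum.distrib[symmetric]) (rule sum.cong, auto)
  also have "(\<Sum>\<sigma>\<in>P. if Q \<sigma> x then 1 else 0) = card {\<sigma>\<in>P. Q \<sigma> x}"
    using sum.inter_filter[OF assms, of "\<lambda>_. 1::nat"] by simp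
  finally show ?case using add by simp
qed

lemma averaging:
  assumes G: "multigraph G" and cU: "card (\<Union>(set_mset G)) \<le> N"
    and F0: "F0 \<subseteq> complete_graph N" and Ffree: "\<not> contains_copy (mset_set F0) H"
  shows "size G * card F0 \<le> exM G H * (N choose 2)"
proof (cases "G = {#}")
  case True then show ?thesis by simp
next
  case False
  let ?U = "\<Union>(set_mset G)"
  let ?P = "{\<sigma>. \<sigma> permutes {0..<N}}"
  let ?X = "\<lambda>e. card {\<sigma>. \<sigma> permutes {0..<N} \<and> \<sigma> ` e \<in> F0}"
  have finU: "finite ?U"
    using multigraph_finU[OF G] .
  obtain \<iota> where io: "\<iota> ` ?U \<subseteq> {0..<N}" "inj_on \<iota> ?U"
    using card_le_inj[OF finU, of "{0..<N}"] cU by auto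
  have iK: "\<iota> ` e \<in> complete_graph N" if "e \<in># G" for e
  proof -
    have "e \<subseteq> ?U" using that by auto
    then have "card (\<iota> ` e) = card e" using io(2) by (meson card_image inj_on_subset)
    moreover have "\<iota> ` e \<subseteq> {0..<N}" using io(1) \<open>e \<subseteq> ?U\<close> by blast
    ultimately show ?thesis unfolding complete_graph_char using that G multigraph_sub by auto
  qed
  obtain e0 where e0: "e0 \<in># G" using False by (meson multiset_nonemptyE)
  define X0 where "X0 = ?X (\<iota> ` e0)"
  have Xc: "?X (\<iota> ` e) = X0" if "e \<in># G" for e
    unfolding X0_def using X_le[where Fs=F0, OF iK[OF that] iK[OF e0]] X_le[where Fs=F0, OF iK[OF e0] iK[OF that]] by linarith
  have finF0: "finite F0" using F0 finite_complete_graph finite_subset by auto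
  have sub_free: "\<not> contains_copy (filter_mset (\<lambda>e. \<sigma> ` (\<iota> ` e) \<in> F0) G) H" if s: "\<sigma> permutes {0..<N}" for \<sigma>
  proof
    assume "contains_copy (filter_mset (\<lambda>e. \<sigma> ` (\<iota> ` e) \<in> F0) G) H"
    then obtain f where f: "inj_on f (verts H)" "\<forall>e\<in>H. f ` e \<in># G \<and> \<sigma> ` \<iota> ` f ` e \<in> F0"
      unfolding contains_copy_def by auto
    have fU: "f ` verts H \<subseteq> ?U" using f(2) unfolding verts_def by blast
    have "inj_on (\<sigma> \<circ> \<iota> \<circ> f) (verts H)"
    proof (rule inj_onI)
      fix x y assume xy: "x \<in> verts H" "y \<in> verts H" "(\<sigma> \<circ> \<iota> \<circ> f) x = (\<sigma> \<circ> \<iota> \<circ> f) y"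
      then have "\<iota> (f x) = \<iota> (f y)" using permutes_inj[OF s] by (auto dest: injD)
      moreover have "f x \<in> ?U" "f y \<in> ?U" using fU xy by auto
      ultimately have "f x = f y" using io(2) by (auto dest: inj_onD)
      then show "x = y" using f(1) xy by (auto dest: inj_onD)
    qed
    moreover have "\<forall>e\<in>H. (\<sigma> \<circ> \<iota> \<circ> f) ` e \<in> set_mset (mset_set F0)"
      using f(2) finF0 by (simp add: image_comp)
    ultimately show False using Ffree unfolding contains_copy_set by blast
  qed
  have le: "size (filter_mset (\<lambda>e. \<sigma> ` (\<iota> ` e) \<in> F0) G) \<le> exM G H" if "\<sigma> \<in> ?P" for \<sigma>
  proof -
    have "\<sigma> permutes {0..<N}" using that by simp
    then show ?thesis by (rule exM_ge[OF multiset_filter_subset sub_free])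
  qed
  have im: "image_mset (\<lambda>e. ?X (\<iota> ` e)) G = image_mset (\<lambda>_. X0) G"
    by (rule image_mset_cong) (rule Xc)
  have "size G * X0 = (\<Sum>e\<in>#G. ?X (\<iota> ` e))"
    unfolding im by simp
  also have "\<dots> = (\<Sum>e\<in>#G. card {\<sigma>\<in>?P. \<sigma> ` (\<iota> ` e) \<in> F0})" by simp
  also have "\<dots> = (\<Sum>\<sigma>\<in>?P. size (filter_mset (\<lambda>e. \<sigma> ` (\<iota> ` e) \<in> F0) G))"
    by (rule sum_size_filter[symmetric]) (rule finite_permutations[OF finite_atLeastLessThan[of 0 N]])
  also have "\<dots> \<le> (\<Sum>\<sigma>\<in>?P. exM G H)" by (rule sum_mono) (rule le)
  also have "\<dots> = card ?P * exM G H" by simp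
  finally have A: "size G * X0 \<le> card ?P * exM G H" .
  have B: "X0 * (N choose 2) = card ?P * card F0" unfolding X0_def by (rule X_const[OF F0 iK[OF e0]])
  have "card ?P * (size G * card F0) = size G * (X0 * (N choose 2))" using B by (simp add: ac_simps)
  also have "\<dots> = (size G * X0) * (N choose 2)" by (simp add: ac_simps)
  also have "\<dots> \<le> (card ?P * exM G H) * (N choose 2)" using A by simp
  also have "\<dots> = card ?P * (exM G H * (N choose 2))" by (simp add: ac_simps)
  finally have C: "card ?P * (size G * card F0) \<le> card ?P * (exM G H * (N choose 2))" .
  have "card ?P > 0" using finite_permutations[OF finite_atLeastLessThan[of 0 N]] permutes_id[of "{0..<N}"]
    by (metis card_gt_0_iff empty_iff mem_Collect_eq)
  then show ?thesis using C by simp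
qed


lemma sub_mset_set:
  assumes "F \<subseteq># mset_set A" "finite A"
  shows "size F = card (set_mset F)" "set_mset F \<subseteq> A" "F = mset_set (set_mset F)"
proof -
  have c: "count F x \<le> 1" for x
  proof -
    have "count F x \<le> count (mset_set A) x" by (meson assms(1) mset_subset_eq_count)
    moreover have "count (mset_set A) x \<le> 1" by (cases "x \<in> A") (auto simp: count_mset_set assms(2))
    ultimately show ?thesis by simp
  qed
  show eq: "F = mset_set (set_mset F)"
  proof (rule multiset_eqI)
    fix x show "count F x = count (mset_set (set_mset F)) x"
    proof (cases "x \<in># F")
      case True
      then have "count F x \<ge> 1" by (simp add: Suc_le_eq)
      then have "count F x = 1" using c[of x] by linarith
      then show ?thesis using True by (simp add: count_mset_set)
    next
      case False
      then show ?thesis by (simp add: count_mset_set not_in_iff)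
    qed
  qed
  show "size F = card (set_mset F)" by (subst eq) simp
  show "set_mset F \<subseteq> A" using assms set_mset_mono by fastforce
qed

lemma deg_le_nb:
  assumes "\<forall>e\<in>F. card e = 2"
  shows "{e\<in>F. v \<in> e} \<subseteq> (\<lambda>w. {v, w}) ` {w. {v, w} \<in> F}"
proof
  fix e assume e: "e \<in> {e\<in>F. v \<in> e}"
  then have "card e = 2" using assms by auto
  then obtain w where "e = {v, w}" using e by (auto simp: card_2_iff)
  then show "e \<in> (\<lambda>w. {v, w}) ` {w. {v, w} \<in> F}" using e by auto
qed

lemma leafy_embed:
  fixes H :: "'a set set" and F :: "'b set set" and g :: "'a \<Rightarrow> 'b"
  assumes sH: "simple_graph H" and L: "L \<subseteq> verts H" "\<forall>e\<in>H. card (e \<inter> L) = 1"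
    "\<forall>x\<in>L. \<forall>e\<in>H. \<forall>e'\<in>H. x \<in> e \<longrightarrow> x \<in> e' \<longrightarrow> e = e'"
    and F: "finite F" "\<forall>e\<in>F. card e = 2"
    and g: "inj_on g (verts H - L)" "\<forall>z\<in>verts H - L. card (verts H) \<le> card {e\<in>F. g z \<in> e}"
  shows "contains_copy (mset_set F) H"
proof -
  let ?Z = "verts H - L"
  let ?h = "card (verts H)"
  have finV: "finite (verts H)" using sH unfolding simple_graph_def verts_def
    by (metis card.infinite finite_Union zero_neq_numeral)
  have finL: "finite L" using L(1) finV finite_subset by auto
  have hZL: "?h = card ?Z + card L" using L(1) finV
    by (metis card_Diff_subset finL card_mono le_add_diff_inverse2)
  have "\<forall>l\<in>L. \<exists>y. {l, y} \<in> H \<and> y \<in> ?Z"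
  proof
    fix l assume l: "l \<in> L"
    then obtain e where e: "e \<in> H" "l \<in> e" using L(1) unfolding verts_def by auto
    have "card e = 2" using sH e unfolding simple_graph_def by auto
    then obtain y where y: "e = {l, y}" "y \<noteq> l" using e(2) by (auto simp: card_2_iff)
    have "card (e \<inter> L) = 1" using L(2) e by auto
    then have "y \<notin> L" using y l by (auto simp: card_2_iff)
    moreover have "y \<in> verts H" using e y unfolding verts_def by auto
    ultimately show "\<exists>y. {l, y} \<in> H \<and> y \<in> ?Z" using e y by auto
  qed
  then obtain c where c: "\<forall>l\<in>L. {l, c l} \<in> H \<and> c l \<in> ?Z" by metis
  have nb: "?h \<le> card {w. {g z, w} \<in> F}" if "z \<in> ?Z" for z
  proof -
    have "finite (\<Union>F)" using F by (metis card.infinite finite_Union zero_neq_numeral)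
    then have "finite {w. {g z, w} \<in> F}" by (rule finite_subset[rotated]) auto
    then have "card {e\<in>F. g z \<in> e} \<le> card {w. {g z, w} \<in> F}"
      using card_mono[OF finite_imageI deg_le_nb[OF F(2)]] card_image_le order_trans by blast
    moreover have "?h \<le> card {e\<in>F. g z \<in> e}" using g(2) that by blast
    ultimately show ?thesis by linarith
  qed
  have greedy: "\<exists>\<phi>. inj_on \<phi> L' \<and> (\<forall>l\<in>L'. \<phi> l \<notin> g ` ?Z \<and> {g (c l), \<phi> l} \<in> F)" if "L' \<subseteq> L" for L'
  proof -
    have "finite L'" using that finL finite_subset by auto
    then show ?thesis using that
    proof (induction L' rule: finite_subset_induct')
      case empty then show ?case by auto
    next
      case (insert a L'')
      then obtain \<phi> where \<phi>: "inj_on \<phi> L''" "\<forall>l\<in>L''. \<phi> l \<notin> g ` ?Z \<and> {g (c l), \<phi> l} \<in> F" by blast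
      let ?A = "g ` ?Z \<union> \<phi> ` L''"
      have "card ?A \<le> card (g ` ?Z) + card (\<phi> ` L'')" by (rule card_Un_le)
      also have "\<dots> \<le> card ?Z + card L''" by (intro add_mono card_image_le) (use finV insert.hyps(1) in auto)
      finally have "card ?A \<le> card ?Z + card L''" .
      moreover have "L'' \<subseteq> L" using insert.hyps(3) .
      then have "card L'' < card L"
        by (intro psubset_card_mono[OF finL]) (use insert.hyps in auto)
      ultimately have cA: "card ?A < ?h" using hZL by linarith
      have "c a \<in> ?Z" using c insert.hyps(2) by auto
      then have "card ?A < card {w. {g (c a), w} \<in> F}" using nb cA by fastforce
      moreover have finA: "finite ?A" using finV insert.hyps(1) by auto
      ultimately have "\<not> {w. {g (c a), w} \<in> F} \<subseteq> ?A" using card_mono[OF finA] by (meson not_le)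
      then obtain w where w: "w \<in> {w. {g (c a), w} \<in> F}" "w \<notin> ?A" by blast
      define \<phi>' where "\<phi>' = \<phi>(a := w)"
      have eqon: "\<forall>l\<in>L''. \<phi>' l = \<phi> l" using insert.hyps(4) unfolding \<phi>'_def by auto
      have i1: "inj_on \<phi>' L''" using inj_on_cong[of L'' \<phi>' \<phi>] eqon \<phi>(1) by auto
      have "\<phi>' ` L'' = \<phi> ` L''"
      proof (rule image_cong[OF refl])
        fix l assume "l \<in> L''" then show "\<phi>' l = \<phi> l" using eqon by blast
      qed
      moreover have "\<phi>' a = w" unfolding \<phi>'_def by simp
      ultimately have i2: "\<phi>' a \<notin> \<phi>' ` (L'' - {a})" using w(2) by auto
      have "inj_on \<phi>' (insert a L'')" by (subst inj_on_insert) (use i1 i2 in blast)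
      moreover have "\<forall>l\<in>insert a L''. \<phi>' l \<notin> g ` ?Z \<and> {g (c l), \<phi>' l} \<in> F"
      proof
        fix l assume l: "l \<in> insert a L''"
        show "\<phi>' l \<notin> g ` ?Z \<and> {g (c l), \<phi>' l} \<in> F"
        proof (cases "l = a")
          case True then show ?thesis using w unfolding \<phi>'_def by simp
        next
          case False
          then have "l \<in> L''" "\<phi>' l = \<phi> l" using l eqon by auto
          then show ?thesis using \<phi>(2) by simp
        qed
      qed
      ultimately show ?case by blast
    qed
  qed
  obtain \<phi> where \<phi>: "inj_on \<phi> L" "\<forall>l\<in>L. \<phi> l \<notin> g ` ?Z \<and> {g (c l), \<phi> l} \<in> F"
    using greedy[of L] by blast
  define f where "f = (\<lambda>x. if x \<in> L then \<phi> x else g x)"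
  have "inj_on f (verts H)"
  proof (rule inj_onI)
    fix x y assume xy: "x \<in> verts H" "y \<in> verts H" "f x = f y"
    show "x = y"
    proof (cases "x \<in> L")
      case xL: True
      show ?thesis
      proof (cases "y \<in> L")
        case True
        then have "\<phi> x = \<phi> y" using xy(3) xL unfolding f_def by simp
        then show ?thesis using inj_onD[OF \<phi>(1)] xL True by blast
      next
        case False
        then have "f y \<in> g ` ?Z" using xy(2) unfolding f_def by simp
        moreover have "f x \<notin> g ` ?Z" using xL \<phi>(2) unfolding f_def by simp
        ultimately show ?thesis using xy(3) by simp
      qed
    next
      case xL: False
      show ?thesis
      proof (cases "y \<in> L")
        case True
        then have "f y \<notin> g ` ?Z" using \<phi>(2) unfolding f_def by simp
        moreover have "f x \<in> g ` ?Z" using xL xy(1) unfolding f_def by simp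
        ultimately show ?thesis using xy(3) by simp
      next
        case False
        then have "g x = g y" using xy(3) xL unfolding f_def by simp
        then show ?thesis using inj_onD[OF g(1)] xL False xy(1,2) by blast
      qed
    qed
  qed
  moreover have "\<forall>e\<in>H. f ` e \<in> F"
  proof
    fix e assume e: "e \<in> H"
    have "card (e \<inter> L) = 1" using L(2) e by auto
    then obtain l where l: "e \<inter> L = {l}" by (auto simp: card_1_singleton_iff)
    then have lL: "l \<in> L" "l \<in> e" by auto
    have lc: "{l, c l} \<in> H" using c lL by auto
    have "e = {l, c l}" using L(3) lL(1) e lc lL(2) by (meson insertI1)
    moreover have "c l \<notin> L" using c lL by auto
    ultimately have "f ` e = {\<phi> l, g (c l)}" unfolding f_def using lL by auto
    then show "f ` e \<in> F" using \<phi>(2) lL by (simp add: insert_commute)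
  qed
  ultimately show ?thesis using F(1) unfolding contains_copy_set by auto
qed


lemma ex_obtain:
  assumes "H \<noteq> {}"
  obtains F0 where "F0 \<subseteq> complete_graph n" "\<not> contains_copy (mset_set F0) H"
    "card F0 = ex (complete_graph n) H"
proof -
  obtain F where F: "F \<subseteq># mset_set (complete_graph n)" "\<not> contains_copy F H"
    "size F = exM (mset_set (complete_graph n)) H"
    using exM_obtain[OF assms] by blast
  note sm = sub_mset_set[OF F(1) finite_complete_graph]
  have "\<not> contains_copy (mset_set (set_mset F)) H" using F(2) sm(3) by simp
  then show ?thesis using that sm F(3) unfolding ex_def by simp
qed

lemma leafy_linear:
  fixes H :: "'a set set"
  assumes sH: "simple_graph H" and lf: "leafy H" and ns: "\<not> is_star H"
  shows "\<exists>A\<ge>0. \<forall>n. real (ex (complete_graph n) H) \<le> A * real n"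
proof -
  obtain L where L: "L \<subseteq> verts H" "\<forall>e\<in>H. card (e \<inter> L) = 1"
    "\<forall>x\<in>L. \<forall>e\<in>H. \<forall>e'\<in>H. x \<in> e \<longrightarrow> x \<in> e' \<longrightarrow> e = e'"
    using lf unfolding leafy_def by blast
  let ?Z = "verts H - L"
  let ?h = "card (verts H)"
  have finV: "finite (verts H)" using sH unfolding simple_graph_def verts_def
    by (intro finite_Union) (auto intro: card_ge_0_finite)
  have Hne: "H \<noteq> {}" using ns unfolding is_star_def by auto
  have "real (ex (complete_graph n) H) \<le> real (card ?Z + ?h) * real n" for n
  proof -
    obtain F where F: "F \<subseteq> complete_graph n" "\<not> contains_copy (mset_set F) H"
      "card F = ex (complete_graph n) H" using ex_obtain[OF Hne] by blast
    have finF: "finite F" using F(1) finite_complete_graph finite_subset by blast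
    have F2: "\<forall>e\<in>F. card e = 2" "\<forall>e\<in>F. e \<subseteq> {0..<n}" using F(1) unfolding complete_graph_char by auto
    define deg where "deg v = card {e\<in>F. v \<in> e}" for v
    define B where "B = {v\<in>{0..<n}. ?h \<le> deg v}"
    have finB: "finite B" unfolding B_def by simp
    have degn: "deg v \<le> n" for v
    proof -
      have "{w. {v, w} \<in> F} \<subseteq> {0..<n}" using F2(2) by auto
      then have "card {w. {v, w} \<in> F} \<le> n" by (metis card_atLeastLessThan card_mono finite_atLeastLessThan diff_zero)
      moreover have "card {e\<in>F. v \<in> e} \<le> card ((\<lambda>w. {v, w}) ` {w. {v, w} \<in> F})"
        by (rule card_mono[OF finite_imageI deg_le_nb[OF F2(1)]])
          (rule finite_subset[OF \<open>{w. {v, w} \<in> F} \<subseteq> {0..<n}\<close>], simp)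
      moreover have "card ((\<lambda>w. {v, w}) ` {w. {v, w} \<in> F}) \<le> card {w. {v, w} \<in> F}" by (rule card_image_le)
        (rule finite_subset[OF \<open>{w. {v, w} \<in> F} \<subseteq> {0..<n}\<close>], simp)
      ultimately show ?thesis unfolding deg_def by linarith
    qed
    have cB: "card B < card ?Z"
    proof (rule ccontr)
      assume "\<not> card B < card ?Z"
      then obtain g where g: "g ` ?Z \<subseteq> B" "inj_on g ?Z"
        using card_le_inj[of ?Z B] finV finB by auto
      have "\<forall>z\<in>?Z. ?h \<le> card {e\<in>F. g z \<in> e}" using g(1) unfolding B_def deg_def by auto
      then have "contains_copy (mset_set F) H"
        using leafy_embed[OF sH L finF F2(1) g(2)] by blast
      then show False using F(2) by simp
    qed
    have "card F = size (mset_set F)" by simp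
    also have "\<dots> \<le> (\<Sum>v\<in>{0..<n}. size (filter_mset (\<lambda>e. v \<in> e) (mset_set F)))"
    proof (rule cover_bound)
      show "\<forall>e\<in>#mset_set F. e \<inter> {0..<n} \<noteq> {}"
      proof
        fix e assume "e \<in># mset_set F"
        then have "e \<in> F" using finF by simp
        then have "e \<subseteq> {0..<n}" "card e = 2" using F2 by auto
        then have "e \<inter> {0..<n} = e" "e \<noteq> {}" by auto
        then show "e \<inter> {0..<n} \<noteq> {}" by simp
      qed
    qed simp
    also have "\<dots> = (\<Sum>v\<in>{0..<n}. deg v)" unfolding deg_def using finF by simp
    also have "\<dots> = (\<Sum>v\<in>B. deg v) + (\<Sum>v\<in>{0..<n} - B. deg v)"
    proof -
      have "B \<subseteq> {0..<n}" unfolding B_def by auto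
      then show ?thesis using sum.subset_diff[of B "{0..<n}" deg] by simp
    qed
    also have "\<dots> \<le> (\<Sum>v\<in>B. n) + (\<Sum>v\<in>{0..<n} - B. ?h)"
    proof (rule add_mono)
      show "(\<Sum>v\<in>B. deg v) \<le> (\<Sum>v\<in>B. n)" by (rule sum_mono) (rule degn)
      show "(\<Sum>v\<in>{0..<n} - B. deg v) \<le> (\<Sum>v\<in>{0..<n} - B. ?h)"
        by (rule sum_mono) (auto simp: B_def)
    qed
    also have "\<dots> = card B * n + card ({0..<n} - B) * ?h" by simp
    also have "\<dots> \<le> card ?Z * n + n * ?h"
    proof (rule add_mono)
      show "card B * n \<le> card ?Z * n" using cB by simp
      have "card ({0..<n} - B) \<le> n" by (metis card_atLeastLessThan card_mono finite_atLeastLessThan Diff_subset diff_zero)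
      then show "card ({0..<n} - B) * ?h \<le> n * ?h" by simp
    qed
    finally have "card F \<le> (card ?Z + ?h) * n" by (simp add: algebra_simps)
    then have "real (card F) \<le> real ((card ?Z + ?h) * n)" by linarith
    then show ?thesis using F(3) by simp
  qed
  then show ?thesis by (intro exI[of _ "real (card ?Z + ?h)"]) auto
qed

lemma powr_linear_contra:
  fixes A c \<beta> :: real and f :: "nat \<Rightarrow> real"
  assumes "\<beta> > 1" "c > 0" "A \<ge> 0" "\<forall>n\<ge>n0. c * real n powr \<beta> \<le> f n" "\<forall>n. f n \<le> A * real n"
  shows False
proof -
  define y where "y = (A / c + 1) powr (1 / (\<beta> - 1))"
  define n where "n = max n0 (nat \<lceil>y\<rceil> + 1)"
  have n0: "n \<ge> n0" unfolding n_def by simp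
  have ny: "real n \<ge> y" unfolding n_def by linarith
  have npos: "real n > 0" unfolding n_def by simp
  have Ac: "A / c + 1 > 0" using assms by (simp add: divide_nonneg_pos add_nonneg_pos)
  have y0: "y \<ge> 0" unfolding y_def by simp
  have "y powr (\<beta> - 1) = A / c + 1" unfolding y_def using assms Ac by (simp add: powr_powr)
  moreover have "y powr (\<beta> - 1) \<le> real n powr (\<beta> - 1)" by (rule powr_mono2) (use assms y0 ny in auto)
  ultimately have "A / c + 1 \<le> real n powr (\<beta> - 1)" by simp
  then have "c * (A / c + 1) \<le> c * real n powr (\<beta> - 1)" using assms(2) by simp
  moreover have "c * (A / c + 1) = A + c" using assms(2) by (simp add: field_simps)
  ultimately have "A + c \<le> c * real n powr (\<beta> - 1)" by simp
  then have "(A + c) * real n \<le> c * real n powr (\<beta> - 1) * real n" using npos by simp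
  moreover have "real n powr (\<beta> - 1) * real n = real n powr \<beta>"
    using npos by (simp add: powr_diff)
  ultimately have "(A + c) * real n \<le> c * real n powr \<beta>" by (simp add: mult.assoc)
  also have "\<dots> \<le> f n" using assms(4) n0 by simp
  also have "\<dots> \<le> A * real n" using assms(5) by simp
  finally have "c * real n \<le> 0" by (simp add: algebra_simps)
  moreover have "c * real n > 0" using assms(2) npos by simp
  ultimately show False by linarith
qed


lemma two_choose_two: "2 * (n choose 2) = n * (n - 1)"
proof -
  have "even (n * (n - 1))" by (cases "even n") auto
  then show ?thesis unfolding choose_two by simp
qed

lemma simple_complete_graph: "simple_graph (complete_graph n)"
  unfolding simple_graph_def using finite_complete_graph unfolding complete_graph_char by auto

lemma real_bound_alg:
  fixes k c \<beta> :: real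
  assumes "k > 0" "c > 0"
  shows "k * (3 * k) * (3 * k) / (2 * c * (3 * k) powr \<beta>) = 3 powr (2 - \<beta>) / (2 * c) * k powr (3 - \<beta>)"
proof -
  have N: "3 * k > 0" using assms by simp
  have "(3 * k) * (3 * k) = (3 * k) powr 2" using N by (simp add: power2_eq_square)
  then have "k * (3 * k) * (3 * k) / (2 * c * (3 * k) powr \<beta>) = k * ((3 * k) powr 2 / (3 * k) powr \<beta>) / (2 * c)"
    by (simp add: field_simps)
  also have "(3 * k) powr 2 / (3 * k) powr \<beta> = (3 * k) powr (2 - \<beta>)" by (simp add: powr_diff)
  also have "\<dots> = 3 powr (2 - \<beta>) * k powr (2 - \<beta>)" by (simp add: powr_mult)
  also have "k * (3 powr (2 - \<beta>) * k powr (2 - \<beta>)) = 3 powr (2 - \<beta>) * (k * k powr (2 - \<beta>))"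
    by simp
  also have "k * k powr (2 - \<beta>) = k powr (3 - \<beta>)"
  proof -
    have "k powr (3 - \<beta>) = k powr (1 + (2 - \<beta>))" by simp
    also have "\<dots> = k powr 1 * k powr (2 - \<beta>)" by (rule powr_add)
    finally show ?thesis using assms by simp
  qed
  finally show ?thesis by simp
qed

lemma part2_nonleafy:
  fixes H :: "'a set set" and G :: "nat set multiset"
  assumes sH: "simple_graph H" and nm: "\<not> is_matching H" and ns: "\<not> is_star H" and nl: "\<not> leafy H"
    and c: "c > 0" and lb: "\<forall>n\<ge>n0. c * real n powr \<beta> \<le> real (ex (complete_graph n) H)"
    and k: "k \<ge> n0" "k \<ge> 1" and G: "multigraph G" "exM G H < k"
  shows "real (size G) \<le> 3 powr (2 - \<beta>) / (2 * c) * real k powr (3 - \<beta>)"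
proof -
  define N where "N = 3 * k"
  have Hne: "H \<noteq> {}" using ns unfolding is_star_def by auto
  have cU: "card (\<Union>(set_mset G)) \<le> N" using struct_bound(2)[OF G(1) sH nm ns G(2) nl] unfolding N_def by simp
  obtain F0 where F0: "F0 \<subseteq> complete_graph N" "\<not> contains_copy (mset_set F0) H"
    "card F0 = ex (complete_graph N) H" using ex_obtain[OF Hne] by blast
  have av: "size G * card F0 \<le> exM G H * (N choose 2)" by (rule averaging[OF G(1) cU F0(1,2)])
  have "2 * (size G * card F0) \<le> exM G H * (2 * (N choose 2))" using av by simp
  also have "\<dots> \<le> k * (N * N)" unfolding two_choose_two
    by (rule mult_le_mono) (use G(2) in auto)
  finally have nat: "2 * (size G * card F0) \<le> k * (N * N)" .
  then have r1: "2 * (real (size G) * real (card F0)) \<le> real k * (real N * real N)"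
    by (metis of_nat_le_iff of_nat_mult of_nat_numeral)
  have "N \<ge> n0" using k unfolding N_def by simp
  then have r2: "c * real N powr \<beta> \<le> real (card F0)" using lb F0(3) by simp
  have Npos: "real N > 0" using k unfolding N_def by simp
  have "2 * (real (size G) * (c * real N powr \<beta>)) \<le> 2 * (real (size G) * real (card F0))"
    using r2 by (intro mult_left_mono) auto
  also note r1
  finally have r3: "real (size G) * (2 * c * real N powr \<beta>) \<le> real k * real N * real N"
    by (simp add: algebra_simps)
  have pos: "2 * c * real N powr \<beta> > 0" using c Npos by simp
  have "real (size G) \<le> real k * real N * real N / (2 * c * real N powr \<beta>)"
    using r3 pos by (simp add: pos_le_divide_eq)
  also have "\<dots> = 3 powr (2 - \<beta>) / (2 * c) * real k powr (3 - \<beta>)"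
    unfolding N_def using real_bound_alg[of "real k" c \<beta>] k c by simp
  finally show ?thesis .
qed

lemma part2_leafy:
  fixes H :: "'a set set" and G :: "nat set multiset"
  assumes sH: "simple_graph H" and nm: "\<not> is_matching H" and ns: "\<not> is_star H"
    and b: "\<beta> \<le> 1" and k: "k \<ge> 1" and G: "multigraph G" "exM G H < k"
  shows "real (size G) \<le> 2 * real k powr (3 - \<beta>)"
proof -
  have "size G \<le> 2 * k * k" using struct_bound(1)[OF G(1) sH nm ns G(2)] .
  then have "real (size G) \<le> 2 * (real k * real k)" by (metis of_nat_le_iff of_nat_mult of_nat_numeral mult.assoc)
  also have "real k * real k = real k powr 2" using k by (simp add: power2_eq_square)
  also have "real k powr 2 \<le> real k powr (3 - \<beta>)" by (rule powr_mono) (use b k in auto)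
  finally show ?thesis by simp
qed

lemma E_multi_le:
  assumes "\<And>G :: nat set multiset. multigraph G \<Longrightarrow> exM G H < k \<Longrightarrow> real (size G) \<le> B"
  shows "E_multi H k \<le> ereal B"
  unfolding E_multi_def by (rule Sup_least) (use assms in auto)

lemma part1:
  fixes H :: "'a set set"
  assumes \<alpha>: "\<alpha> > 0" and C: "C > 0" and ub: "\<forall>n\<ge>n1. real (ex (complete_graph n) H) \<le> C * real n powr \<alpha>"
  shows "\<exists>c>0. \<forall>\<^sub>F k in at_top. ereal (c * real k powr (2 / \<alpha>)) \<le> E_simple H k"
proof -
  define c where "c = 1 / (16 * (2 * C) powr (2 / \<alpha>))"
  define M where "M = real n1 + 4"
  define K0 where "K0 = nat \<lceil>2 * C * M powr \<alpha>\<rceil> + 1"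
  have cpos: "c > 0" unfolding c_def using C by simp
  have Mpos: "M > 0" unfolding M_def by simp
  have "ereal (c * real k powr (2 / \<alpha>)) \<le> E_simple H k" if kK: "k \<ge> K0" for k
  proof -
    have kge: "real k \<ge> 2 * C * M powr \<alpha>" using kK unfolding K0_def by linarith
    have kpos: "real k > 0" using kK unfolding K0_def by simp
    define x where "x = (real k / (2 * C)) powr (1 / \<alpha>)"
    have "M powr \<alpha> \<le> real k / (2 * C)" using kge C by (simp add: field_simps)
    then have "(M powr \<alpha>) powr (1 / \<alpha>) \<le> x" unfolding x_def by (intro powr_mono2) (use \<alpha> in auto)
    moreover have "(M powr \<alpha>) powr (1 / \<alpha>) = M" using \<alpha> Mpos by (simp add: powr_powr)
    ultimately have xM: "x \<ge> M" by simp
    have x0: "x \<ge> 0" unfolding x_def by simp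
    define n where "n = nat \<lfloor>x\<rfloor>"
    have nx: "real n \<le> x" "real n \<ge> x - 1" unfolding n_def using x0 by linarith+
    have nn1: "n \<ge> n1" using xM nx unfolding M_def by linarith
    have xa: "x powr \<alpha> = real k / (2 * C)" unfolding x_def using \<alpha> kpos C by (simp add: powr_powr)
    have "real (ex (complete_graph n) H) \<le> C * real n powr \<alpha>" using ub nn1 by simp
    also have "\<dots> \<le> C * x powr \<alpha>" using C \<alpha> nx by (intro mult_left_mono powr_mono2) auto
    also have "\<dots> = real k / 2" using xa C by simp
    finally have "real (ex (complete_graph n) H) < real k" using kpos by linarith
    then have exk: "ex (complete_graph n) H < k" by simp
    have "ereal (real (card (complete_graph n))) \<le> E_simple H k"
      unfolding E_simple_def by (rule Sup_upper) (use exk simple_complete_graph in auto)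
    moreover have "c * real k powr (2 / \<alpha>) \<le> real (card (complete_graph n))"
    proof -
      have x4: "x \<ge> 4" using xM unfolding M_def by simp
      have e1: "2 * real (card (complete_graph n)) = real n * (real n - 1)"
      proof (cases "n = 0")
        case True then show ?thesis by (simp add: card_complete_graph)
      next
        case False
        have "real (2 * (n choose 2)) = real (n * (n - 1))" by (simp only: two_choose_two)
        then show ?thesis using False by (simp add: of_nat_diff card_complete_graph)
      qed
      have e2: "real n * (real n - 1) \<ge> (x - 1) * (x - 2)"
        using nx x4 by (intro mult_mono) auto
      have e3: "(x - 1) * (x - 2) \<ge> x * x / 8"
      proof -
        have xx: "x * x \<ge> 4 * x" using x4 by (intro mult_right_mono) auto
        have "(x - 1) * (x - 2) = x * x - 3 * x + 2" by (simp add: algebra_simps)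
        then show ?thesis using xx x4 by linarith
      qed
      have e4: "x * x = real k powr (2 / \<alpha>) / (2 * C) powr (2 / \<alpha>)"
      proof -
        have "x * x = (real k / (2 * C)) powr (2 / \<alpha>)" unfolding x_def
          by (simp add: powr_add[symmetric])
        also have "\<dots> = real k powr (2 / \<alpha>) / (2 * C) powr (2 / \<alpha>)" by (simp add: powr_divide)
        finally show ?thesis .
      qed
      have "real k powr (2 / \<alpha>) / (2 * C) powr (2 / \<alpha>) / 16 = (x * x / 8) / 2" using e4 by simp
      also have "\<dots> \<le> ((x - 1) * (x - 2)) / 2" using e3 by simp
      also have "\<dots> \<le> (real n * (real n - 1)) / 2" using e2 by simp
      also have "\<dots> = real (card (complete_graph n))" using e1 by simp
      finally have "real k powr (2 / \<alpha>) / (2 * C) powr (2 / \<alpha>) / 16 \<le> real (card (complete_graph n))" .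
      then show ?thesis unfolding c_def by simp
    qed
    ultimately show ?thesis by (meson ereal_less_eq(3) order_trans)
  qed
  then have "\<forall>\<^sub>F k in at_top. ereal (c * real k powr (2 / \<alpha>)) \<le> E_simple H k"
    using eventually_at_top_linorder by blast
  then show ?thesis using cpos by blast
qed


theorem theorem3p23:
  fixes H :: "'a set set" and \<alpha> \<beta> :: real
  assumes "simple_graph H" and "\<not> is_matching H" and "\<not> is_star H"
    and "\<alpha> > 0" and "\<beta> > 0"
  shows "((\<lambda>n. real (ex (complete_graph n) H)) \<in> O(\<lambda>n. real n powr \<alpha>) \<longrightarrow>
           (\<exists>c>0. \<forall>\<^sub>F k in at_top. ereal (c * real k powr (2 / \<alpha>)) \<le> E_simple H k))
       \<and> ((\<lambda>n. real (ex (complete_graph n) H)) \<in> \<Omega>(\<lambda>n. real n powr \<beta>) \<longrightarrow>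
           (\<exists>C>0. \<forall>\<^sub>F k in at_top. E_multi H k \<le> ereal (C * real k powr (3 - \<beta>))))"
proof (intro conjI impI)
  assume O: "(\<lambda>n. real (ex (complete_graph n) H)) \<in> O(\<lambda>n. real n powr \<alpha>)"
  obtain C where C: "C > 0"
    "eventually (\<lambda>n. norm (real (ex (complete_graph n) H)) \<le> C * norm (real n powr \<alpha>)) at_top"
    using landau_o.bigE[OF O] by blast
  then obtain n1 where n1: "\<forall>n\<ge>n1. norm (real (ex (complete_graph n) H)) \<le> C * norm (real n powr \<alpha>)"
    by (auto simp: eventually_at_top_linorder)
  have "\<forall>n\<ge>n1. real (ex (complete_graph n) H) \<le> C * real n powr \<alpha>" using n1 by simp
  then show "\<exists>c>0. \<forall>\<^sub>F k in at_top. ereal (c * real k powr (2 / \<alpha>)) \<le> E_simple H k"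
    by (rule part1[OF assms(4) C(1)])
next
  assume Om: "(\<lambda>n. real (ex (complete_graph n) H)) \<in> \<Omega>(\<lambda>n. real n powr \<beta>)"
  obtain c where c: "c > 0"
    "eventually (\<lambda>n. norm (real (ex (complete_graph n) H)) \<ge> c * norm (real n powr \<beta>)) at_top"
    using landau_omega.bigE[OF Om] by blast
  then obtain n0 where n0: "\<forall>n\<ge>n0. norm (real (ex (complete_graph n) H)) \<ge> c * norm (real n powr \<beta>)"
    by (auto simp: eventually_at_top_linorder)
  have lb: "\<forall>n\<ge>n0. c * real n powr \<beta> \<le> real (ex (complete_graph n) H)" using n0 by simp
  show "\<exists>C>0. \<forall>\<^sub>F k in at_top. E_multi H k \<le> ereal (C * real k powr (3 - \<beta>))"
  proof (cases "leafy H")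
    case True
    obtain A where A: "A \<ge> 0" "\<forall>n. real (ex (complete_graph n) H) \<le> A * real n"
      using leafy_linear[OF assms(1) True assms(3)] by blast
    have b1: "\<beta> \<le> 1"
    proof (rule ccontr)
      assume "\<not> \<beta> \<le> 1"
      then have "\<beta> > 1" by simp
      then show False using powr_linear_contra[OF _ c(1) A(1) lb A(2)] by blast
    qed
    have "\<forall>k\<ge>1. E_multi H k \<le> ereal (2 * real k powr (3 - \<beta>))"
    proof (intro allI impI)
      fix k :: nat assume k: "k \<ge> 1"
      show "E_multi H k \<le> ereal (2 * real k powr (3 - \<beta>))"
        by (rule E_multi_le) (rule part2_leafy[OF assms(1-3) b1 k])
    qed
    then show ?thesis by (intro exI[of _ 2]) (auto simp: eventually_at_top_linorder)
  next
    case False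
    define C where "C = 3 powr (2 - \<beta>) / (2 * c)"
    have Cpos: "C > 0" unfolding C_def using c(1) by simp
    have "\<forall>k\<ge>max n0 1. E_multi H k \<le> ereal (C * real k powr (3 - \<beta>))"
    proof (intro allI impI)
      fix k :: nat assume k: "k \<ge> max n0 1"
      show "E_multi H k \<le> ereal (C * real k powr (3 - \<beta>))" unfolding C_def
        by (rule E_multi_le) (rule part2_nonleafy[OF assms(1-3) False c(1) lb], use k in auto)
    qed
    then have "\<forall>\<^sub>F k in at_top. E_multi H k \<le> ereal (C * real k powr (3 - \<beta>))"
      unfolding eventually_at_top_linorder by blast
    then show ?thesis using Cpos by blast
  qed
qed

end
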